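(* Consider the system \[ x_{k+1} = x_k - \rho y_k + \hat g(y_k,w_k),\qquad y_{k+1} = (1-\beta)y_k + \hat h(y_{k-1},w_{k-1})\bigl(J(x_k)-J(x_{k-1})\bigr) \] with the setup described in the context. Then for any $k\ge1$, \[ \mathbb{E}[\mu h_{k-1}g_{k-1}\Delta_{k-1}]=\frac{\mu\gamma}{2}\Bigl(\rho^2\mathbb{E}[y_{k-1}^2]-2\rho\,\mathbb{E}[\tilde x_{k-1}y_{k-1}]+\psi\,\mathbb{E}\bigl[(|y_{k-1}|+\varepsilon)^2\bigr]\Bigr). \]
   Context: Setup. Parameters: $\rho>0$, $\beta\in(0,2)$, $\varepsilon>0$, $\omega>0$. The random variables $w_i$, $i\in\mathbb{N}\cup\{0\}$, are i.i.d., each taking the value $-\omega$ or $\omega$ with probability $1/2$. The functions $h,g:\mathbb{R}\to\mathbb{R}$ are odd, satisfy $\mathrm{sign}(g(w))=\mathrm{sign}(h(w))$ for all $w$, and $g(w)=h(w)=0$ if and only if $w=0$. Define $\hat h(y,w):=\frac{h(w)}{|y|+\varepsilon}$ and $\hat g(y,w):=(|y|+\varepsilon)g(w)$. The objective is $J(x)=J^*+\frac{\mu}{2}(x-x^* )^2$ with $\mu>0$, $x^*,J^*\in\mathbb{R}$. The initial data $x_0,y_0$ and the initialization $y_1$ (the $y$-update being applied for $k\ge1$) are deterministic. Notation: $h_k:=h(w_k)$, $g_k:=g(w_k)$, $\tilde x_k:=x_k-x^*$, $\psi:=\mathbb{E}[g_k^2]$, $\gamma:=\mathbb{E}[h_kg_k]$,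 and \[ \Delta_{k-1}:=(\tilde x_{k-1}-\rho y_{k-1})(|y_{k-1}|+\varepsilon)g_{k-1}-\rho\tilde x_{k-1}y_{k-1}+\tfrac{\rho^2}{2}y_{k-1}^2+\tfrac{g_{k-1}^2}{2}(|y_{k-1}|+\varepsilon)^2 . \] *)

theory Defs
  imports "HOL-Probability.Probability"
begin

definition hhat :: "(real \<Rightarrow> real) \<Rightarrow> real \<Rightarrow> real \<Rightarrow> real \<Rightarrow> real" where
  "hhat h eps y w = h w / (\<bar>y\<bar> + eps)"

definition ghat :: "(real \<Rightarrow> real) \<Rightarrow> real \<Rightarrow> real \<Rightarrow> real \<Rightarrow> real" where
  "ghat g eps y w = (\<bar>y\<bar> + eps) * g w"

definition Delta :: "real \<Rightarrow> real \<Rightarrow> real \<Rightarrow> real \<Rightarrow> real \<Rightarrow> real" where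
  "Delta rho eps xt y gv =
     (xt - rho * y) * (\<bar>y\<bar> + eps) * gv - rho * xt * y + rho^2 / 2 * y^2
     + gv^2 / 2 * (\<bar>y\<bar> + eps)^2"

end

theory Submission
  imports Defs
begin

lemma delta_alg:
  fixes gv gw wv om rho eps xt yv :: real
  assumes "gv = gw * wv / om" "gv^2 = gw^2"
  shows "Delta rho eps xt yv gv = (gw / om) * ((xt - rho * yv) * (\<bar>yv\<bar> + eps) * wv) - rho * (xt * yv)
     + rho^2 / 2 * yv^2 + gw^2 / 2 * (\<bar>yv\<bar> + eps)^2"
proof -
  have "Delta rho eps xt yv gv = (xt - rho * yv) * (\<bar>yv\<bar> + eps) * gv - rho * (xt * yv)
     + rho^2 / 2 * yv^2 + gv^2 / 2 * (\<bar>yv\<bar> + eps)^2"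
    unfolding Delta_def by (simp add: mult.assoc)
  also have "\<dots> = (xt - rho * yv) * (\<bar>yv\<bar> + eps) * gv - rho * (xt * yv)
     + rho^2 / 2 * yv^2 + gw^2 / 2 * (\<bar>yv\<bar> + eps)^2"
    by (simp only: assms(2))
  also have "(xt - rho * yv) * (\<bar>yv\<bar> + eps) * gv = (gw / om) * ((xt - rho * yv) * (\<bar>yv\<bar> + eps) * wv)"
    unfolding assms(1) by simp
  finally show ?thesis .
qed

theorem lemma4:
  fixes M :: "'a measure"
    and w x y :: "nat \<Rightarrow> 'a \<Rightarrow> real"
    and h g J :: "real \<Rightarrow> real"
    and rho beta eps omega mu xstar Jstar x0 y0 y1 :: real
    and k :: nat
  assumes "prob_space M"
    and "rho > 0" and "0 < beta" and "beta < 2" and "eps > 0" and "omega > 0"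
    and indep: "prob_space.indep_vars M (\<lambda>_. borel) w UNIV"
    and wvals: "\<And>i s. s \<in> space M \<Longrightarrow> w i s = - omega \<or> w i s = omega"
    and wplus: "\<And>i. measure M {s \<in> space M. w i s = omega} = 1/2"
    and wminus: "\<And>i. measure M {s \<in> space M. w i s = - omega} = 1/2"
    and h_odd: "\<And>v. h (- v) = - h v"
    and g_odd: "\<And>v. g (- v) = - g v"
    and sgn_gh: "\<And>v. sgn (g v) = sgn (h v)"
    and g_zero: "\<And>v. g v = 0 \<longleftrightarrow> v = 0"
    and h_zero: "\<And>v. h v = 0 \<longleftrightarrow> v = 0"
    and "mu > 0"
    and J_def: "\<And>z. J z = Jstar + mu / 2 * (z - xstar)^2"
    and x_init: "\<And>s. s \<in> space M \<Longrightarrow> x 0 s = x0"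
    and y_init0: "\<And>s. s \<in> space M \<Longrightarrow> y 0 s = y0"
    and y_init1: "\<And>s. s \<in> space M \<Longrightarrow> y 1 s = y1"
    and x_rec: "\<And>n s. s \<in> space M \<Longrightarrow>
        x (Suc n) s = x n s - rho * y n s + ghat g eps (y n s) (w n s)"
    and y_rec: "\<And>n s. n \<ge> 1 \<Longrightarrow> s \<in> space M \<Longrightarrow>
        y (Suc n) s = (1 - beta) * y n s
          + hhat h eps (y (n - 1) s) (w (n - 1) s) * (J (x n s) - J (x (n - 1) s))"
    and "k \<ge> 1"
  shows "(let psi = integral\<^sup>L M (\<lambda>s. (g (w (k - 1) s))^2);
              gamma = integral\<^sup>L M (\<lambda>s. h (w (k - 1) s) * g (w (k - 1) s))
          in integral\<^sup>L M (\<lambda>s. mu * h (w (k - 1) s) * g (w (k - 1) s)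
                 * Delta rho eps (x (k - 1) s - xstar) (y (k - 1) s) (g (w (k - 1) s)))
             = mu * gamma / 2 *
                 (rho^2 * integral\<^sup>L M (\<lambda>s. (y (k - 1) s)^2)
                  - 2 * rho * integral\<^sup>L M (\<lambda>s. (x (k - 1) s - xstar) * y (k - 1) s)
                  + psi * integral\<^sup>L M (\<lambda>s. (\<bar>y (k - 1) s\<bar> + eps)^2)))"
proof -
  interpret P: prob_space M by fact
  obtain n where n: "n = k - 1" by blast
  define K where "K = {..<n}"
  define A where "A = (\<lambda>s. restrict (\<lambda>i. w i s) K)"
  define PK where "PK = PiM K (\<lambda>_::nat. (borel :: real measure))"
  have wmeas: "\<And>i. w i \<in> borel_measurable M"
    using indep unfolding P.indep_vars_def by auto
  have Ameas: "A \<in> measurable M PK"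
    unfolding A_def PK_def by (intro measurable_restrict wmeas)
  have gw: "\<And>i s. s \<in> space M \<Longrightarrow> g (w i s) = g omega * w i s / omega"
  proof -
    fix i s assume s: "s \<in> space M"
    show "g (w i s) = g omega * w i s / omega"
      using wvals[OF s, of i] g_odd[of omega] \<open>omega > 0\<close> by auto
  qed
  have hw: "\<And>i s. s \<in> space M \<Longrightarrow> h (w i s) = h omega * w i s / omega"
  proof -
    fix i s assume s: "s \<in> space M"
    show "h (w i s) = h omega * w i s / omega"
      using wvals[OF s, of i] h_odd[of omega] \<open>omega > 0\<close> by auto
  qed
  have Aw: "\<And>i s. i < n \<Longrightarrow> A s i = w i s"
    unfolding A_def K_def by simp
  have repr: "m \<le> n \<longrightarrow> (\<exists>X Y. X \<in> borel_measurable PK \<and> Y \<in> borel_measurable PK \<and>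
      (\<forall>s\<in>space M. x m s = X (A s) \<and> y m s = Y (A s)))" for m
  proof (induction m rule: less_induct)
    case (less m)
    show ?case
    proof (cases m)
      case 0
      then show ?thesis using x_init y_init0
        by (intro impI exI[of _ "\<lambda>_. x0"] exI[of _ "\<lambda>_. y0"]) auto
    next
      case (Suc j)
      show ?thesis
      proof (cases j)
        case 0
        show ?thesis
        proof
          assume mn: "m \<le> n"
          have Xm: "(\<lambda>a. x0 - rho * y0 + (\<bar>y0\<bar> + eps) * (g omega * a 0 / omega)) \<in> borel_measurable PK"
            unfolding PK_def K_def by (measurable; insert mn Suc 0; auto)
          show "\<exists>X Y. X \<in> borel_measurable PK \<and> Y \<in> borel_measurable PK \<and>
            (\<forall>s\<in>space M. x m s = X (A s) \<and> y m s = Y (A s))"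
            apply (rule exI[of _ "\<lambda>a. x0 - rho * y0 + (\<bar>y0\<bar> + eps) * (g omega * a 0 / omega)"],
                rule exI[of _ "\<lambda>_. y1"], intro conjI Xm)
             apply simp
            using mn Suc 0 x_rec x_init y_init0 y_init1 gw Aw
            by (auto simp: ghat_def)
        qed
      next
        case (Suc i)
        show ?thesis
        proof
          assume mn: "m \<le> n"
          from less[of i] obtain X1 Y1 where X1: "X1 \<in> borel_measurable PK" "Y1 \<in> borel_measurable PK"
            "\<forall>s\<in>space M. x i s = X1 (A s) \<and> y i s = Y1 (A s)"
            using mn \<open>m = Suc j\<close> Suc by auto
          from less[of j] obtain X2 Y2 where X2: "X2 \<in> borel_measurable PK" "Y2 \<in> borel_measurable PK"
            "\<forall>s\<in>space M. x j s = X2 (A s) \<and> y j s = Y2 (A s)"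
            using mn \<open>m = Suc j\<close> Suc by auto
          have jK: "j \<in> K" "i \<in> K" using mn \<open>m = Suc j\<close> Suc unfolding K_def by auto
          define X where "X = (\<lambda>a. X2 a - rho * Y2 a + (\<bar>Y2 a\<bar> + eps) * (g omega * a j / omega))"
          define Y where "Y = (\<lambda>a. (1 - beta) * Y2 a + (h omega * a i / omega) / (\<bar>Y1 a\<bar> + eps)
              * ((Jstar + mu / 2 * (X2 a - xstar)^2) - (Jstar + mu / 2 * (X1 a - xstar)^2)))"
          have "X \<in> borel_measurable PK"
            unfolding X_def using X1 X2 jK unfolding PK_def by (measurable; insert jK; auto)
          moreover have "Y \<in> borel_measurable PK"
            unfolding Y_def using X1 X2 jK unfolding PK_def by (measurable; insert jK; auto)
          moreover have "\<forall>s\<in>space M. x m s = X (A s) \<and> y m s = Y (A s)"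
          proof
            fix s assume s: "s \<in> space M"
            have "A s j = w j s" "A s i = w i s" using jK unfolding A_def by auto
            then show "x m s = X (A s) \<and> y m s = Y (A s)"
              using X1(3) X2(3) s \<open>m = Suc j\<close> Suc x_rec[OF s, of j] y_rec[OF _ s, of j]
                gw[OF s] hw[OF s] J_def
              unfolding X_def Y_def by (simp add: ghat_def hhat_def)
          qed
          ultimately show "\<exists>X Y. X \<in> borel_measurable PK \<and> Y \<in> borel_measurable PK \<and>
            (\<forall>s\<in>space M. x m s = X (A s) \<and> y m s = Y (A s))" by blast
        qed
      qed
    qed
  qed
  obtain X Y where XY: "X \<in> borel_measurable PK" "Y \<in> borel_measurable PK"
      "\<And>s. s \<in> space M \<Longrightarrow> x n s = X (A s) \<and> y n s = Y (A s)"
    using repr[of n] by auto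
  have S: "\<And>s. s \<in> space M \<Longrightarrow> A s \<in> PiE K (\<lambda>_. {-omega, omega})"
    using wvals unfolding A_def by auto
  have intA: "integrable M f" if Phi: "Phi \<in> borel_measurable PK"
      and f: "\<And>s. s \<in> space M \<Longrightarrow> f s = Phi (A s)" for Phi :: "(nat \<Rightarrow> real) \<Rightarrow> real" and f
  proof -
    let ?S = "PiE K (\<lambda>_. {-omega, omega})"
    have fin: "finite ?S" unfolding K_def by (intro finite_PiE) auto
    have "integrable M (\<lambda>s. Phi (A s))"
      apply (rule P.integrable_const_bound[where B="Max ((\<lambda>a. \<bar>Phi a\<bar>) ` ?S)"])
      using S fin apply (auto intro!: Max_ge AE_I2)[1]
      using measurable_compose[OF Ameas Phi] by simp
    moreover have "integrable M f \<longleftrightarrow> integrable M (\<lambda>s. Phi (A s))"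
      by (rule Bochner_Integration.integrable_cong) (auto simp: f)
    ultimately show ?thesis by simp
  qed
  define F where "F = (\<lambda>a. (X a - xstar - rho * Y a) * (\<bar>Y a\<bar> + eps))"
  have Fm: "F \<in> borel_measurable PK" unfolding F_def using XY by measurable
  have "P.indep_var PK A (PiM {n} (\<lambda>_. borel)) (\<lambda>s. restrict (\<lambda>i. w i s) {n})"
    using P.indep_var_restrict[OF indep, of K "{n}"] unfolding A_def PK_def K_def by auto
  then have "P.indep_var borel (F \<circ> A) borel ((\<lambda>b. b n) \<circ> (\<lambda>s. restrict (\<lambda>i. w i s) {n}))"
    by (rule P.indep_var_compose) (use Fm in measurable)
  then have ind2: "P.indep_var borel (\<lambda>s. F (A s)) borel (w n)"
    by (simp add: comp_def)
  have wb: "\<And>s. s \<in> space M \<Longrightarrow> \<bar>w n s\<bar> \<le> omega"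
    using wvals \<open>omega > 0\<close> by (metis abs_minus_cancel abs_of_pos order_refl)
  have intw: "integrable M (w n)"
    apply (rule P.integrable_const_bound[where B=omega])
    using wb apply (auto intro!: AE_I2)[1]
    using wmeas[of n] by simp
  have intF: "integrable M (\<lambda>s. F (A s))" by (rule intA[OF Fm]) simp
  have m1: "{s \<in> space M. w n s = omega} \<in> sets M" using wmeas by measurable
  have m2: "{s \<in> space M. w n s = - omega} \<in> sets M" using wmeas by measurable
  have "integral\<^sup>L M (w n) = integral\<^sup>L M (\<lambda>s. omega * indicator {s \<in> space M. w n s = omega} s
      - omega * indicator {s \<in> space M. w n s = - omega} s)"
    apply (rule Bochner_Integration.integral_cong[OF refl])
    using wvals \<open>omega > 0\<close> by (auto simp: indicator_def)
  also have "\<dots> = omega * measure M {s \<in> space M. w n s = omega} - omega * measure M {s \<in> space M. w n s = - omega}"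
    using m1 m2 by (simp add: P.emeasure_eq_measure)
  also have "\<dots> = 0" using wplus[of n] wminus[of n] by simp
  finally have Ew: "integral\<^sup>L M (w n) = 0" .
  have prod: "integral\<^sup>L M (\<lambda>s. F (A s) * w n s) = 0"
    using P.indep_var_lebesgue_integral[OF ind2 intF intw] Ew by simp
  have intprod: "integrable M (\<lambda>s. F (A s) * w n s)"
    using P.indep_var_integrable[OF ind2 intF intw] .
  define c where "c = h omega * g omega"
  have w2: "\<And>s. s \<in> space M \<Longrightarrow> (w n s)^2 = omega^2"
    using wvals by (metis power2_minus)
  have hg: "\<And>s. s \<in> space M \<Longrightarrow> h (w n s) * g (w n s) = c"
  proof -
    fix s assume s: "s \<in> space M"
    have "h (w n s) * g (w n s) = h omega * g omega * (w n s)^2 / omega^2"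
      using hw[OF s] gw[OF s] by (simp add: power2_eq_square)
    then show "h (w n s) * g (w n s) = c" using w2[OF s] \<open>omega > 0\<close> c_def by simp
  qed
  have gg: "\<And>s. s \<in> space M \<Longrightarrow> (g (w n s))^2 = (g omega)^2"
  proof -
    fix s assume s: "s \<in> space M"
    have "(g (w n s))^2 = (g omega)^2 * (w n s)^2 / omega^2"
      using gw[OF s] by (simp add: power_divide power_mult_distrib)
    then show "(g (w n s))^2 = (g omega)^2" using w2[OF s] \<open>omega > 0\<close> by simp
  qed
  have gamma: "integral\<^sup>L M (\<lambda>s. h (w n s) * g (w n s)) = c"
    using hg by (simp add: Bochner_Integration.integral_cong[of M M _ "\<lambda>_. c"] P.prob_space)
  have psi: "integral\<^sup>L M (\<lambda>s. (g (w n s))^2) = (g omega)^2"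
    using gg by (simp add: Bochner_Integration.integral_cong[of M M _ "\<lambda>_. (g omega)^2"] P.prob_space)
  have int1: "integrable M (\<lambda>s. (x n s - xstar) * y n s)"
    by (rule intA[of "\<lambda>a. (X a - xstar) * Y a"]) (use XY in auto)
  have int2: "integrable M (\<lambda>s. (y n s)^2)"
    by (rule intA[of "\<lambda>a. (Y a)^2"]) (use XY in auto)
  have int3: "integrable M (\<lambda>s. (\<bar>y n s\<bar> + eps)^2)"
    by (rule intA[of "\<lambda>a. (\<bar>Y a\<bar> + eps)^2"]) (use XY in auto)
  define Pf where "Pf = (\<lambda>s. F (A s) * w n s)"
  define Q1 where "Q1 = (\<lambda>s. (x n s - xstar) * y n s)"
  define Q2 where "Q2 = (\<lambda>s. (y n s)^2)"
  define Q3 where "Q3 = (\<lambda>s. (\<bar>y n s\<bar> + eps)^2)"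
  define G where "G = (\<lambda>s. (g omega / omega) * Pf s - rho * Q1 s + rho^2 / 2 * Q2 s + (g omega)^2 / 2 * Q3 s)"
  have pw: "mu * h (w n s) * g (w n s) * Delta rho eps (x n s - xstar) (y n s) (g (w n s))
     = mu * c * G s"
    if s: "s \<in> space M" for s
  proof -
    have FA: "F (A s) = (x n s - xstar - rho * y n s) * (\<bar>y n s\<bar> + eps)"
      using XY(3)[OF s] unfolding F_def by simp
    have "Delta rho eps (x n s - xstar) (y n s) (g (w n s)) = G s"
      unfolding G_def Pf_def Q1_def Q2_def Q3_def FA
      by (rule delta_alg[OF gw[OF s] gg[OF s]])
    then show ?thesis using hg[OF s] by (simp add: mult.assoc)
  qed
  have "integral\<^sup>L M (\<lambda>s. mu * h (w n s) * g (w n s) * Delta rho eps (x n s - xstar) (y n s) (g (w n s)))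
     = integral\<^sup>L M (\<lambda>s. mu * c * G s)"
    by (rule Bochner_Integration.integral_cong[OF refl]) (rule pw)
  also have "\<dots> = mu * c * integral\<^sup>L M G" by simp
  also have "integral\<^sup>L M G = (g omega / omega) * integral\<^sup>L M Pf - rho * integral\<^sup>L M Q1
      + rho^2 / 2 * integral\<^sup>L M Q2 + (g omega)^2 / 2 * integral\<^sup>L M Q3"
  proof -
    have i1: "integrable M Pf" "integrable M Q1" "integrable M Q2" "integrable M Q3"
      using intprod int1 int2 int3 unfolding Pf_def Q1_def Q2_def Q3_def by auto
    show ?thesis unfolding G_def
      by (simp add: i1 Bochner_Integration.integral_add Bochner_Integration.integral_diff)
  qed
  finally have main: "integral\<^sup>L M (\<lambda>s. mu * h (w n s) * g (w n s) * Delta rho eps (x n s - xstar) (y n s) (g (w n s)))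
     = mu * c * (- rho * integral\<^sup>L M Q1 + rho^2 / 2 * integral\<^sup>L M Q2 + (g omega)^2 / 2 * integral\<^sup>L M Q3)"
    using prod unfolding Pf_def by simp
  have final: "mu * c * (- rho * a1 + rho^2 / 2 * a2 + gg2 / 2 * a3) = mu * c / 2 * (rho^2 * a2 - 2 * rho * a1 + gg2 * a3)"
    for a1 a2 a3 gg2 :: real by (simp add: algebra_simps)
  show ?thesis
    unfolding n[symmetric] Let_def gamma psi main final unfolding Q1_def Q2_def Q3_def ..
qed

end
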